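(* Let $\widehat Q_\sigma$ be a component of the multivariate extension $\widehat Q$ of a query $Q$. There exists an optimal tree decomposition of $\widehat Q_\sigma$ (i.e., one whose width equals $\mathsf{w}(\widehat Q_\sigma)$) in which every bag is $Z$-prefix-closed.
   Context: A query is a full conjunctive query $Q = R_1(\mathbf X_1)\wedge\cdots\wedge R_k(\mathbf X_k)$. Multivariate extension: take fresh variables $Z_1,\dots,Z_k$; for a permutation $\sigma$ of $[k]$, the component $\widehat Q_\sigma$ replaces each atom $R_{\sigma_i}(\mathbf X_{\sigma_i})$ by $\widehat R_{\sigma_i}(Z_1,\dots,Z_i,\mathbf X_{\sigma_i})$. A set of variables $\mathbf Y$ of $\widehat Q_\sigma$ is $Z$-prefix-closed if for every $Z_i\in\mathbf Y$ we have $\{Z_1,\dots,Z_{i-1}\}\subseteq\mathbf Y$. Tree decomposition of a query $P$: a tree with bags of variables such that every atom schema is contained in some bag and the bags containing any variable form a connected subtree; its width is the maximum over bags $B$ of the fractional edge cover number of $P$ restricted to $B$ (each atom schema intersected with $B$); $\mathsf{w}(P)$ is the minimum width over all tree decompositions. *)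

theory Defs
  imports Complex_Main "HOL-Library.Extended_Real" "HOL-Combinatorics.Permutations"
begin

text \<open>A (full conjunctive) query is represented by the list of the variable
schemas of its atoms, in order. Relation names play no role for tree
decompositions, widths or prefix-closedness, so only the schemas are kept.\<close>

type_synonym 'v query = "'v set list"

text \<open>Variables of the extension are 'v + nat:
Inl x is an original variable x, Inr i is the fresh variable Z_(i+1)
(0-based indexing).\<close>

definition mv_component :: "'v query \<Rightarrow> (nat \<Rightarrow> nat) \<Rightarrow> ('v + nat) query" where
  "mv_component Q \<sigma> = map (\<lambda>i. Inr ` {..i} \<union> Inl ` (Q ! \<sigma> i)) [0..<length Q]"

definition z_prefix_closed :: "('v + nat) set \<Rightarrow> bool" where
  "z_prefix_closed Y \<longleftrightarrow> (\<forall>i. Inr i \<in> Y \<longrightarrow> (\<forall>j<i. Inr j \<in> Y))"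

definition adj_within :: "nat set set \<Rightarrow> nat set \<Rightarrow> (nat \<times> nat) set" where
  "adj_within E S = {(a, b). {a, b} \<in> E \<and> a \<in> S \<and> b \<in> S}"

definition connected_in :: "nat set set \<Rightarrow> nat set \<Rightarrow> bool" where
  "connected_in E S \<longleftrightarrow> (\<forall>a\<in>S. \<forall>b\<in>S. (a, b) \<in> (adj_within E S)\<^sup>*)"

definition is_tree :: "nat set \<Rightarrow> nat set set \<Rightarrow> bool" where
  "is_tree N E \<longleftrightarrow> finite N \<and> N \<noteq> {} \<and> (\<forall>e\<in>E. e \<subseteq> N \<and> card e = 2)
     \<and> connected_in E N \<and> card E + 1 = card N"

definition is_tree_decomp :: "'a query \<Rightarrow> nat set \<Rightarrow> nat set set \<Rightarrow> (nat \<Rightarrow> 'a set) \<Rightarrow> bool" where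
  "is_tree_decomp P N E bag \<longleftrightarrow> is_tree N E
     \<and> (\<forall>S\<in>set P. \<exists>t\<in>N. S \<subseteq> bag t)
     \<and> (\<forall>x. connected_in E {t\<in>N. x \<in> bag t})"

text \<open>Fractional edge cover number of P restricted to B (atoms S_j intersected
with B); infeasible covers give infinity.\<close>

definition frac_edge_cover :: "'a query \<Rightarrow> 'a set \<Rightarrow> ereal" where
  "frac_edge_cover P B = Inf {ereal (\<Sum>j<length P. w j) | w.
      (\<forall>j. w j \<ge> 0) \<and> (\<forall>v\<in>B. (\<Sum>j | j < length P \<and> v \<in> P ! j \<inter> B. w j) \<ge> 1)}"

definition td_width :: "'a query \<Rightarrow> nat set \<Rightarrow> (nat \<Rightarrow> 'a set) \<Rightarrow> ereal" where
  "td_width P N bag = (SUP t\<in>N. frac_edge_cover P (bag t))"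

definition tw :: "'a query \<Rightarrow> ereal" where
  "tw P = Inf {td_width P N bag | N E bag. is_tree_decomp P N E bag}"

end

theory Submission
  imports Defs
begin

lemma adj_mono: "S \<subseteq> S' \<Longrightarrow> adj_within E S \<subseteq> adj_within E S'"
  unfolding adj_within_def by auto

lemma path_mono: "(a, b) \<in> (adj_within E S)\<^sup>* \<Longrightarrow> S \<subseteq> S' \<Longrightarrow> (a, b) \<in> (adj_within E S')\<^sup>*"
  using rtrancl_mono[OF adj_mono] by blast

lemma connected_union:
  assumes A: "connected_in E A"
    and C: "\<And>l. l \<in> I \<Longrightarrow> connected_in E (C l) \<and> C l \<inter> A \<noteq> {}"
  shows "connected_in E (A \<union> (\<Union>l\<in>I. C l))"
proof -
  let ?U = "A \<union> (\<Union>l\<in>I. C l)"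
  let ?R = "(adj_within E ?U)\<^sup>*"
  have key: "\<exists>c\<in>A. (a, c) \<in> ?R \<and> (c, a) \<in> ?R" if "a \<in> ?U" for a
  proof (cases "a \<in> A")
    case True thus ?thesis by blast
  next
    case False
    then obtain l where l: "l \<in> I" "a \<in> C l" using \<open>a \<in> ?U\<close> by blast
    then obtain c where c: "c \<in> C l" "c \<in> A" using C by blast
    have "(a, c) \<in> (adj_within E (C l))\<^sup>*" "(c, a) \<in> (adj_within E (C l))\<^sup>*"
      using C[OF l(1)] l c unfolding connected_in_def by blast+
    moreover have "C l \<subseteq> ?U" using l by blast
    ultimately show ?thesis using c path_mono by metis
  qed
  show ?thesis unfolding connected_in_def
  proof (intro ballI)
    fix a b assume a: "a \<in> ?U" and b: "b \<in> ?U"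
    obtain c where c: "c \<in> A" "(a, c) \<in> ?R" using key[OF a] by blast
    obtain d where d: "d \<in> A" "(d, b) \<in> ?R" using key[OF b] by blast
    have "(c, d) \<in> (adj_within E A)\<^sup>*" using A c d unfolding connected_in_def by blast
    hence "(c, d) \<in> ?R" using path_mono by blast
    thus "(a, b) \<in> ?R" using c d by (meson rtrancl_trans)
  qed
qed

lemma fec_alt: "frac_edge_cover P B = Inf {ereal (\<Sum>j<length P. w j) | w.
      (\<forall>j. w j \<ge> 0) \<and> (\<forall>v\<in>B. (\<Sum>j | j < length P \<and> v \<in> P ! j. w j) \<ge> 1)}"
proof -
  have "\<And>v w. v \<in> B \<Longrightarrow> (\<Sum>j | j < length P \<and> v \<in> P ! j \<inter> B. w j) = (\<Sum>j | j < length P \<and> v \<in> P ! j. w j)"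
    by simp
  hence "\<And>w. (\<forall>v\<in>B. (\<Sum>j | j < length P \<and> v \<in> P ! j \<inter> B. w j) \<ge> 1) = (\<forall>v\<in>B. (\<Sum>j | j < length P \<and> v \<in> P ! j. w j) \<ge> 1)"
    by (metis (no_types, lifting))
  thus ?thesis unfolding frac_edge_cover_def by simp
qed

definition sigs :: "'a query \<Rightarrow> 'a set \<Rightarrow> nat set set" where
  "sigs P B = (\<lambda>v. {j. j < length P \<and> v \<in> P ! j}) ` B"

definition gcov :: "'a query \<Rightarrow> nat set set \<Rightarrow> ereal" where
  "gcov P S = Inf {ereal (\<Sum>j<length P. w j) | w.
      (\<forall>j. w j \<ge> 0) \<and> (\<forall>s\<in>S. (\<Sum>j\<in>s. w j) \<ge> 1)}"

lemma fec_sig: "frac_edge_cover P B = gcov P (sigs P B)"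
  unfolding fec_alt gcov_def sigs_def by simp

lemma fec_range_finite: "finite (range (frac_edge_cover P))"
proof -
  have "range (frac_edge_cover P) \<subseteq> gcov P ` Pow (Pow {..<length P})"
    unfolding fec_sig sigs_def by auto
  thus ?thesis by (rule finite_subset) simp
qed

lemma tw_attained:
  "\<exists>N E bag. is_tree_decomp P N E bag \<and> td_width P N bag = tw P"
proof -
  define W where "W = {td_width P N bag | N E bag. is_tree_decomp P N E bag}"
  have triv: "is_tree_decomp P {0} {} (\<lambda>_. UNIV)"
    unfolding is_tree_decomp_def is_tree_def connected_in_def by auto
  hence ne: "W \<noteq> {}" unfolding W_def by blast
  have sub: "W \<subseteq> range (frac_edge_cover P)"
  proof
    fix x assume "x \<in> W"
    then obtain N E bag where x: "x = td_width P N bag" and td: "is_tree_decomp P N E bag"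
      unfolding W_def by blast
    have "finite N" "N \<noteq> {}" using td unfolding is_tree_decomp_def is_tree_def by auto
    hence "x = Max ((\<lambda>t. frac_edge_cover P (bag t)) ` N)"
      unfolding x td_width_def by (simp add: cSup_eq_Max)
    also have "\<dots> \<in> (\<lambda>t. frac_edge_cover P (bag t)) ` N"
      using \<open>finite N\<close> \<open>N \<noteq> {}\<close> by (intro Max_in) auto
    finally show "x \<in> range (frac_edge_cover P)" by blast
  qed
  have fin: "finite W" using finite_subset[OF sub fec_range_finite] .
  have "tw P = Inf W" unfolding tw_def W_def by simp
  also have "\<dots> = Min W" using fin ne by (simp add: cInf_eq_Min)
  also have "\<dots> \<in> W" using fin ne by (rule Min_in)
  finally have "tw P \<in> W" .
  then obtain N E bag where "tw P = td_width P N bag" "is_tree_decomp P N E bag"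
    unfolding W_def by blast
  thus ?thesis by metis
qed

theorem mainTheorem14:
  fixes Q :: "'v query" and \<sigma> :: "nat \<Rightarrow> nat"
  assumes "\<forall>X\<in>set Q. finite X"
    and "\<sigma> permutes {..<length Q}"
  shows "\<exists>N E bag. is_tree_decomp (mv_component Q \<sigma>) N E bag
           \<and> td_width (mv_component Q \<sigma>) N bag = tw (mv_component Q \<sigma>)
           \<and> (\<forall>t\<in>N. z_prefix_closed (bag t))"
proof -
  define P where "P = mv_component Q \<sigma>"
  define k where "k = length P"
  have Pi: "i < k \<Longrightarrow> P ! i = Inr ` {..i} \<union> Inl ` (Q ! \<sigma> i)" for i
    unfolding P_def k_def mv_component_def by simp
  have Inr_in: "i < k \<Longrightarrow> Inr l \<in> P ! i \<longleftrightarrow> l \<le> i" for i l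
    using Pi by auto
  define V where "V = \<Union>(set P)"
  have V_iff: "x \<in> V \<longleftrightarrow> (\<exists>i<k. x \<in> P ! i)" for x
    unfolding V_def k_def by (auto simp: in_set_conv_nth) (metis nth_mem)
  have Inr_down: "Inr j \<in> V" if "Inr l \<in> V" "j \<le> l" for j l
    using that V_iff Inr_in by (meson order_trans)
  obtain N E bag where td: "is_tree_decomp P N E bag" and wd: "td_width P N bag = tw P"
    using tw_attained by blast
  define bag' where "bag' t = (bag t \<inter> V) \<union> {Inr j | j. \<exists>l. Inr l \<in> bag t \<inter> V \<and> j < l}" for t
  have bag'_V: "bag' t \<subseteq> V" for t
    unfolding bag'_def using Inr_down by auto
  have cover: "\<forall>S\<in>set P. \<exists>t\<in>N. S \<subseteq> bag' t"
  proof
    fix S assume S: "S \<in> set P"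
    then obtain t where "t \<in> N" "S \<subseteq> bag t" using td unfolding is_tree_decomp_def by blast
    moreover have "S \<subseteq> V" using S unfolding V_def by blast
    ultimately show "\<exists>t\<in>N. S \<subseteq> bag' t" unfolding bag'_def by blast
  qed
  have conn: "connected_in E {t\<in>N. x \<in> bag' t}" for x
  proof (cases "x \<in> V")
    case False
    hence "{t\<in>N. x \<in> bag' t} = {}" using bag'_V by blast
    thus ?thesis unfolding connected_in_def by (simp only: ball_empty)
  next
    case True
    have cb: "connected_in E {t\<in>N. y \<in> bag t}" for y using td unfolding is_tree_decomp_def by blast
    show ?thesis
    proof (cases x)
      case (Inl v)
      hence "{t\<in>N. x \<in> bag' t} = {t\<in>N. x \<in> bag t}" using True unfolding bag'_def by auto
      thus ?thesis using cb by simp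
    next
      case (Inr j)
      let ?I = "{l. j < l \<and> Inr l \<in> V}"
      have eq: "{t\<in>N. x \<in> bag' t} = {t\<in>N. x \<in> bag t} \<union> (\<Union>l\<in>?I. {t\<in>N. Inr l \<in> bag t})"
        using True Inr unfolding bag'_def by auto
      have "connected_in E ({t\<in>N. x \<in> bag t} \<union> (\<Union>l\<in>?I. {t\<in>N. Inr l \<in> bag t}))"
      proof (rule connected_union[OF cb])
        fix l assume l: "l \<in> ?I"
        then obtain i where i: "i < k" "Inr l \<in> P ! i" using V_iff by blast
        have "P ! i \<in> set P" using i(1) unfolding k_def by simp
        then obtain t where t: "t \<in> N" "P ! i \<subseteq> bag t" using td unfolding is_tree_decomp_def by blast
        have "l \<le> i" using Inr_in i by blast
        hence "Inr j \<in> P ! i" using Inr_in[OF i(1)] l by simp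
        hence "t \<in> {t\<in>N. Inr l \<in> bag t} \<inter> {t\<in>N. x \<in> bag t}" using t i Inr by blast
        thus "connected_in E {t\<in>N. Inr l \<in> bag t} \<and> {t\<in>N. Inr l \<in> bag t} \<inter> {t\<in>N. x \<in> bag t} \<noteq> {}"
          using cb by blast
      qed
      thus ?thesis using eq by simp
    qed
  qed
  have td': "is_tree_decomp P N E bag'"
    using td cover conn unfolding is_tree_decomp_def by blast
  have fec_le: "frac_edge_cover P (bag' t) \<le> frac_edge_cover P (bag t)" for t
    unfolding fec_alt
  proof (rule Inf_superset_mono, safe)
    fix w :: "nat \<Rightarrow> real"
    assume w0: "\<forall>j. 0 \<le> w j" and wf: "\<forall>v\<in>bag t. 1 \<le> (\<Sum>j | j < length P \<and> v \<in> P ! j. w j)"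
    have "\<forall>v\<in>bag' t. 1 \<le> (\<Sum>j | j < length P \<and> v \<in> P ! j. w j)"
    proof
      fix v assume v: "v \<in> bag' t"
      show "1 \<le> (\<Sum>j | j < length P \<and> v \<in> P ! j. w j)"
      proof (cases "v \<in> bag t")
        case True thus ?thesis using wf by blast
      next
        case False
        then obtain j l where jl: "v = Inr j" "Inr l \<in> bag t" "j < l" using v unfolding bag'_def by blast
        have "1 \<le> (\<Sum>i | i < length P \<and> Inr l \<in> P ! i. w i)" using wf jl by blast
        also have "\<dots> \<le> (\<Sum>i | i < length P \<and> Inr j \<in> P ! i. w i)"
          by (rule sum_mono2) (use w0 jl Inr_in k_def in auto)
        finally show ?thesis using jl by simp
      qed
    qed
    thus "\<exists>w'. ereal (sum w {..<length P}) = ereal (sum w' {..<length P}) \<and>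
            (\<forall>j. 0 \<le> w' j) \<and> (\<forall>v\<in>bag' t. 1 \<le> (\<Sum>j | j < length P \<and> v \<in> P ! j. w' j))"
      using w0 by blast
  qed
  have le1: "td_width P N bag' \<le> td_width P N bag"
    unfolding td_width_def by (rule SUP_mono) (use fec_le in blast)
  have le2: "tw P \<le> td_width P N bag'"
    unfolding tw_def using td' by (intro Inf_lower) blast
  have pc: "z_prefix_closed (bag' t)" for t
    unfolding z_prefix_closed_def bag'_def by auto
  show ?thesis unfolding P_def[symmetric]
    using td' le1 le2 wd pc by (intro exI[of _ N] exI[of _ E] exI[of _ bag']) auto
qed

end
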